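(* Let $x\in\mathbb{R}$ be irrational and suppose there are $\alpha\in(0,1)$ and a sequence of rational numbers $(p_j/q_j)_{j\ge1}$ (with $p_j\in\mathbb{Z}$, $q_j\in\mathbb{N}$) with $\lim_{j\to\infty}q_j=+\infty$ such that $\left|x-\frac{p_j}{q_j}\right|\le\alpha^{q_j}$ for each $j\in\mathbb{N}$. Let $r=e^{i2\pi x}$ and $\varphi_r(z)=rz$ for $z\in\mathbb{D}$. Then $1\in\sigma(C_{\varphi_r}, H_0(\mathbb{D}))$.
   Context: $\mathbb{D}$ is the open unit disc; $H_0(\mathbb{D})$ is the Fréchet space of analytic functions $f$ on $\mathbb{D}$ with $f(0)=0$, with the topology of uniform convergence on compact subsets; $C_{\varphi_r}f=f\circ\varphi_r$. For a continuous linear operator $T$ on a Fréchet space $X$, $\sigma(T;X)$ is the set of $\lambda\in\mathbb{C}$ such that $\lambda I-T$ is not a bijection with continuous inverse. *)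

theory Defs
  imports "HOL-Analysis.Analysis"
begin

text \<open>H_0(D): analytic functions on the open unit disc vanishing at 0.
  Functions are normalised to be 0 outside the disc, so that equality of
  elements of H0 is equality as functions on the disc.\<close>
definition H0 :: "(complex \<Rightarrow> complex) set" where
  "H0 = {f. f holomorphic_on ball 0 1 \<and> f 0 = 0 \<and> (\<forall>z. z \<notin> ball 0 1 \<longrightarrow> f z = 0)}"

definition H0_top :: "(complex \<Rightarrow> complex) topology" where
  "H0_top = topology (\<lambda>U. U \<subseteq> H0 \<and>
     (\<forall>f\<in>U. \<exists>K e. compact K \<and> K \<subseteq> ball 0 1 \<and> e > 0 \<and>
        {g\<in>H0. \<forall>z\<in>K. cmod (g z - f z) < e} \<subseteq> U))"

definition Cphi :: "complex \<Rightarrow> (complex \<Rightarrow> complex) \<Rightarrow> (complex \<Rightarrow> complex)" where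
  "Cphi r f = (\<lambda>z. if z \<in> ball 0 1 then f (r * z) else 0)"

definition H0_spectrum :: "((complex \<Rightarrow> complex) \<Rightarrow> (complex \<Rightarrow> complex)) \<Rightarrow> complex set" where
  "H0_spectrum T = {lam. \<not> (bij_betw (\<lambda>f z. lam * f z - T f z) H0 H0 \<and>
       continuous_map H0_top H0_top (inv_into H0 (\<lambda>f z. lam * f z - T f z)))}"

end

theory Submission imports Defs begin
definition Pt :: "(complex \<Rightarrow> complex) set \<Rightarrow> bool" where
  "Pt = (\<lambda>U. U \<subseteq> H0 \<and>
     (\<forall>f\<in>U. \<exists>K e. compact K \<and> K \<subseteq> ball 0 1 \<and> e > 0 \<and>
        {g\<in>H0. \<forall>z\<in>K. cmod (g z - f z) < e} \<subseteq> U))"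

lemma PtI:
  assumes "U \<subseteq> H0" "\<And>f. f \<in> U \<Longrightarrow> \<exists>K e. compact K \<and> K \<subseteq> ball 0 1 \<and> e > 0 \<and>
        {g\<in>H0. \<forall>z\<in>K. cmod (g z - f z) < e} \<subseteq> U"
  shows "Pt U" using assms unfolding Pt_def by blast

lemma PtD:
  assumes "Pt U" "f \<in> U"
  obtains K e where "compact K" "K \<subseteq> ball 0 1" "e > 0"
        "{g\<in>H0. \<forall>z\<in>K. cmod (g z - f z) < e} \<subseteq> U"
  using assms unfolding Pt_def by blast

lemma PtD2: "Pt U \<Longrightarrow> U \<subseteq> H0" unfolding Pt_def by blast

lemma istop: "istopology Pt"
  unfolding istopology_def
proof (intro conjI allI impI)
  fix S T assume S: "Pt S" and T: "Pt T"
  show "Pt (S \<inter> T)"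
  proof (rule PtI)
    show "S \<inter> T \<subseteq> H0" using PtD2[OF S] by blast
    fix f assume f: "f \<in> S \<inter> T"
    obtain K1 e1 where 1: "compact K1" "K1 \<subseteq> ball 0 1" "e1 > 0"
      "{g\<in>H0. \<forall>z\<in>K1. cmod (g z - f z) < e1} \<subseteq> S"
      using PtD[OF S] f by blast
    obtain K2 e2 where 2: "compact K2" "K2 \<subseteq> ball 0 1" "e2 > 0"
      "{g\<in>H0. \<forall>z\<in>K2. cmod (g z - f z) < e2} \<subseteq> T"
      using PtD[OF T] f by blast
    have "{g\<in>H0. \<forall>z\<in>K1 \<union> K2. cmod (g z - f z) < min e1 e2} \<subseteq> S \<inter> T"
    proof
      fix g assume g: "g \<in> {g\<in>H0. \<forall>z\<in>K1 \<union> K2. cmod (g z - f z) < min e1 e2}"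
      have "g \<in> S" using g 1(4) by fastforce
      moreover have "g \<in> T" using g 2(4) by fastforce
      ultimately show "g \<in> S \<inter> T" by blast
    qed
    moreover have "compact (K1 \<union> K2)" using 1 2 by (simp add: compact_Un)
    moreover have "K1 \<union> K2 \<subseteq> ball 0 1" using 1 2 by blast
    moreover have "min e1 e2 > 0" using 1 2 by simp
    ultimately show "\<exists>K e. compact K \<and> K \<subseteq> ball 0 1 \<and> e > 0 \<and>
        {g\<in>H0. \<forall>z\<in>K. cmod (g z - f z) < e} \<subseteq> S \<inter> T"
      by (intro exI[of _ "K1 \<union> K2"] exI[of _ "min e1 e2"] conjI)
  qed
next
  fix K assume K: "\<forall>S\<in>K. Pt S"
  show "Pt (\<Union>K)"
  proof (rule PtI)
    show "\<Union>K \<subseteq> H0" using K PtD2 by blast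
    fix f assume "f \<in> \<Union>K"
    then obtain S where S: "S \<in> K" "f \<in> S" by blast
    then obtain K1 e1 where 1: "compact K1" "K1 \<subseteq> ball 0 1" "e1 > 0"
      "{g\<in>H0. \<forall>z\<in>K1. cmod (g z - f z) < e1} \<subseteq> S"
      using K PtD[of S f] by blast
    have "{g\<in>H0. \<forall>z\<in>K1. cmod (g z - f z) < e1} \<subseteq> \<Union>K" using 1(4) S(1) by blast
    then show "\<exists>Ka e. compact Ka \<and> Ka \<subseteq> ball 0 1 \<and> e > 0 \<and>
        {g\<in>H0. \<forall>z\<in>Ka. cmod (g z - f z) < e} \<subseteq> \<Union>K"
      using 1 by (intro exI[of _ K1] exI[of _ e1] conjI)
  qed
qed

lemma openin_H0: "openin H0_top U \<longleftrightarrow> Pt U"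
proof -
  have "H0_top = topology Pt" unfolding H0_top_def Pt_def by (rule refl)
  then show ?thesis using topology_inverse'[OF istop] by simp
qed

lemma topspace_H0: "topspace H0_top = H0"
proof -
  have "Pt H0"
  proof (rule PtI)
    fix f assume "f \<in> H0"
    have "{g\<in>H0. \<forall>z\<in>{0}. cmod (g z - f z) < 1} \<subseteq> H0" by blast
    then show "\<exists>K e. compact K \<and> K \<subseteq> ball 0 1 \<and> e > 0 \<and>
        {g\<in>H0. \<forall>z\<in>K. cmod (g z - f z) < e} \<subseteq> H0"
      by (intro exI[of _ "{0::complex}"] exI[of _ "1::real"]) auto
  qed simp
  then show ?thesis unfolding topspace_def openin_H0 using PtD2 by blast
qed
lemma aux: "(w::complex) * A - w * (B * A) = w * (1 - B) * A"
  by (simp add: algebra_simps)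

theorem mainTheorem4:
  fixes x :: real and \<alpha> :: real and p :: "nat \<Rightarrow> int" and q :: "nat \<Rightarrow> nat"
  assumes "x \<notin> \<rat>"
    and "0 < \<alpha>" and "\<alpha> < 1"
    and "\<forall>j\<ge>1. q j \<ge> 1"
    and "filterlim q at_top sequentially"
    and "\<forall>j\<ge>1. \<bar>x - real_of_int (p j) / real (q j)\<bar> \<le> \<alpha> ^ q j"
  shows "1 \<in> H0_spectrum (Cphi (exp (\<i> * complex_of_real (2 * pi * x))))"
proof -
  define r where "r = exp (\<i> * complex_of_real (2 * pi * x))"
  define T where "T = (\<lambda>f z. 1 * f z - Cphi r f z)"
  have nr: "norm r = 1" unfolding r_def by simp
  define s where "s = (1 + \<alpha>) / 2"
  have s: "\<alpha> < s" "s < 1" "0 < s" using assms(2,3) unfolding s_def by auto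
  have main: "\<not> (bij_betw T H0 H0 \<and> continuous_map H0_top H0_top (inv_into H0 T))"
  proof
    assume "bij_betw T H0 H0 \<and> continuous_map H0_top H0_top (inv_into H0 T)"
    then have bij: "bij_betw T H0 H0" and cont: "continuous_map H0_top H0_top (inv_into H0 T)"
      by auto
    define S where "S = inv_into H0 T"
    have inj: "inj_on T H0" using bij bij_betw_imp_inj_on by blast
    define z0 :: "complex \<Rightarrow> complex" where "z0 = (\<lambda>z. 0)"
    have z0H: "z0 \<in> H0" unfolding z0_def H0_def by auto
    have Tz0: "T z0 = z0" by (simp add: T_def Cphi_def z0_def fun_eq_iff)
    have Sz0: "S z0 = z0" unfolding S_def using inv_into_f_f[OF inj z0H] Tz0 by simp
    define U where "U = {f\<in>H0. cmod (f (complex_of_real s)) < 1}"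
    have PU: "Pt U" unfolding Pt_def
    proof (intro conjI ballI)
      show "U \<subseteq> H0" unfolding U_def by blast
      fix f assume f: "f \<in> U"
      show "\<exists>K e. compact K \<and> K \<subseteq> ball 0 1 \<and> e > 0 \<and>
        {g\<in>H0. \<forall>z\<in>K. cmod (g z - f z) < e} \<subseteq> U"
      proof (rule exI[of _ "{complex_of_real s}"], rule exI[of _ "1 - cmod (f (complex_of_real s))"],
          intro conjI)
        show "{complex_of_real s} \<subseteq> ball 0 1" using s by auto
        show "0 < 1 - cmod (f (complex_of_real s))" using f unfolding U_def by auto
        show "{g \<in> H0. \<forall>z\<in>{complex_of_real s}. cmod (g z - f z) < 1 - cmod (f (complex_of_real s))} \<subseteq> U"
        proof
          fix g assume g: "g \<in> {g \<in> H0. \<forall>z\<in>{complex_of_real s}. cmod (g z - f z) < 1 - cmod (f (complex_of_real s))}"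
          have "cmod (g s) \<le> cmod (g s - f s) + cmod (f s)" by (metis norm_triangle_sub add.commute)
          then show "g \<in> U" using g unfolding U_def by auto
        qed
      qed simp
    qed
    have "openin H0_top {f \<in> topspace H0_top. S f \<in> U}"
      using cont PU unfolding continuous_map_def openin_H0 S_def by blast
    then have PV: "Pt {f \<in> H0. S f \<in> U}" unfolding openin_H0 topspace_H0 .
    have "z0 \<in> {f \<in> H0. S f \<in> U}" using Sz0 z0H unfolding U_def by (simp add: z0_def)
    then obtain K e where K: "compact K" "K \<subseteq> ball 0 1" "e > 0"
      "{g\<in>H0. \<forall>z\<in>K. cmod (g z - z0 z) < e} \<subseteq> {f \<in> H0. S f \<in> U}"
      using PV unfolding Pt_def by blast
    define a where "a = \<alpha> / s"
    have a: "0 < a" "a < 1" using s assms(2) unfolding a_def by auto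
    have "(\<lambda>n. of_nat n * a ^ n) \<longlonglongrightarrow> 0"
      by (rule powser_times_n_limit_0) (use a in auto)
    then have "((\<lambda>n. of_nat n * a ^ n) \<circ> q) \<longlonglongrightarrow> 0"
      using filterlim_compose assms(5) unfolding comp_def by blast
    then have ev: "eventually (\<lambda>j. of_nat (q j) * a ^ q j < e / (4 * pi)) sequentially"
      using K(3) by (intro order_tendstoD(2)) (auto simp: comp_def)
    obtain j where j: "j \<ge> 1" "of_nat (q j) * a ^ q j < e / (4 * pi)"
      using eventually_conj[OF ev eventually_ge_at_top[of 1]] unfolding eventually_sequentially by auto
    define n where "n = q j"
    have n1: "n \<ge> 1" using assms(4) j n_def by auto
    have bnd: "\<bar>x - real_of_int (p j) / real n\<bar> \<le> \<alpha> ^ n" using assms(6) j n_def by auto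
    have an: "real n * a ^ n < e / (4 * pi)" using j n_def by simp
    define c where "c = e / 2"
    have rn: "r ^ n = exp (\<i> * complex_of_real (2 * pi * (real n * x)))"
      unfolding r_def exp_of_nat_mult[symmetric] by (simp add: algebra_simps)
    have rn1: "r ^ n \<noteq> 1"
    proof
      assume "r ^ n = 1"
      then obtain k :: int where "2 * pi * (real n * x) = of_int (2 * k) * pi"
        unfolding rn exp_eq_1 by auto
      then have "real n * x = of_int k" by simp
      then have "x = of_int k / real n" using n1 by (simp add: field_simps)
      then show False using assms(1) by simp
    qed
    define t where "t = real n * x - real_of_int (p j)"
    have "exp (\<i> * complex_of_real (2 * pi * (real n * x))) =
          exp (\<i> * complex_of_real (2 * pi * t)) * exp (complex_of_real (2 * real_of_int (p j)) * pi * \<i>)"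
      unfolding t_def exp_add[symmetric] by (simp add: algebra_simps)
    also have "exp (complex_of_real (2 * real_of_int (p j)) * pi * \<i>) = 1"
      using exp_integer_2pi[of "of_int (p j)"] by simp
    finally have rnt: "r ^ n = exp (\<i> * complex_of_real (2 * pi * t))" using rn by simp
    have "norm (r ^ n - 1) = 2 * \<bar>sin (2 * pi * t / 2)\<bar>" unfolding rnt dist_exp_i_1 ..
    also have "\<dots> \<le> 2 * \<bar>2 * pi * t / 2\<bar>" using abs_sin_x_le_abs_x by simp
    also have "\<bar>2 * pi * t / 2\<bar> = pi * (real n * \<bar>x - real_of_int (p j) / real n\<bar>)"
    proof -
      have e1: "\<bar>2 * pi * t / 2\<bar> = pi * \<bar>t\<bar>" by (simp add: abs_mult)
      have "t = real n * (x - real_of_int (p j) / real n)" using n1 by (simp add: t_def field_simps)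
      then have "\<bar>t\<bar> = real n * \<bar>x - real_of_int (p j) / real n\<bar>" by (simp add: abs_mult)
      then show ?thesis using e1 by simp
    qed
    also have "\<dots> \<le> pi * (real n * \<alpha> ^ n)"
      using bnd by (intro mult_left_mono) auto
    finally have dn: "norm (r ^ n - 1) \<le> 2 * pi * real n * \<alpha> ^ n" by simp
    have "\<alpha> ^ n = a ^ n * s ^ n" unfolding a_def using s by (simp add: power_divide)
    then have "2 * pi * real n * \<alpha> ^ n = 2 * pi * (real n * a ^ n) * s ^ n" by simp
    also have "\<dots> < 2 * pi * (e / (4 * pi)) * s ^ n"
      using an s by (intro mult_strict_right_mono mult_strict_left_mono) auto
    also have "\<dots> = c * s ^ n" unfolding c_def by simp
    finally have dlt: "norm (1 - r ^ n) < c * s ^ n" using dn by (simp add: norm_minus_commute)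
    define d where "d = 1 - r ^ n"
    have d0: "d \<noteq> 0" using rn1 unfolding d_def by simp
    define h where "h = (\<lambda>z. if z \<in> ball 0 1 then (complex_of_real c / d) * z ^ n else 0)"
    define g where "g = (\<lambda>z. if z \<in> ball 0 1 then complex_of_real c * z ^ n else 0)"
    have hH: "h \<in> H0" unfolding H0_def h_def
    proof (intro CollectI conjI allI impI)
      show "(\<lambda>z. if z \<in> ball 0 1 then complex_of_real c / d * z ^ n else 0) holomorphic_on ball 0 1"
        by (rule holomorphic_transform[of "\<lambda>z. complex_of_real c / d * z ^ n"]) (auto intro!: holomorphic_intros)
    qed (use n1 in auto)
    have gH: "g \<in> H0" unfolding H0_def g_def
    proof (intro CollectI conjI allI impI)
      show "(\<lambda>z. if z \<in> ball 0 1 then complex_of_real c * z ^ n else 0) holomorphic_on ball 0 1"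
        by (rule holomorphic_transform[of "\<lambda>z. complex_of_real c * z ^ n"]) (auto intro!: holomorphic_intros)
    qed (use n1 in auto)
    have Th: "T h = g"
    proof
      fix z
      show "T h z = g z"
      proof (cases "z \<in> ball 0 1")
        case True
        then have "r * z \<in> ball 0 1" using nr by (simp add: norm_mult)
        then have "T h z = complex_of_real c / d * z ^ n - complex_of_real c / d * (r * z) ^ n"
          using True unfolding T_def Cphi_def h_def by simp
        also have "\<dots> = complex_of_real c / d * d * z ^ n"
          unfolding d_def power_mult_distrib
          using aux[of "complex_of_real c / (1 - r ^ n)" "z ^ n" "r ^ n"] by simp
        also have "\<dots> = g z" using d0 True unfolding g_def by simp
        finally show ?thesis .
      next
        case False
        then show ?thesis unfolding T_def Cphi_def h_def g_def by simp
      qed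
    qed
    have Sg: "S g = h" unfolding S_def using inv_into_f_f[OF inj hH] Th by simp
    have "g \<in> {g\<in>H0. \<forall>z\<in>K. cmod (g z - z0 z) < e}"
    proof (intro CollectI conjI ballI gH)
      fix z assume "z \<in> K"
      then have z: "norm z < 1" using K(2) by auto
      have "norm z ^ n \<le> 1" using z by (simp add: power_le_one)
      then have "c * norm z ^ n \<le> c" using K(3) unfolding c_def
        by (simp add: mult_left_le)
      then show "cmod (g z - z0 z) < e" using z K(3) unfolding g_def z0_def c_def
        by (simp add: norm_mult norm_power)
    qed
    then have "h \<in> U" using K(4) Sg by auto
    then have hs: "cmod (h (complex_of_real s)) < 1" unfolding U_def by auto
    have "cmod (h (complex_of_real s)) = c * s ^ n / norm d"
      using s K(3) unfolding h_def c_def by (simp add: norm_mult norm_power norm_divide)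
    also have "\<dots> > 1" using dlt d0 unfolding d_def by simp
    finally show False using hs by simp
  qed
  then show ?thesis unfolding H0_spectrum_def T_def r_def by simp
qed

end
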